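(* Let $n\ge1$ and let $p\in\mathbb{R}[x_1,\dots,x_n]$ be a nonconstant real form. The following are equivalent: (A) There is an odd integer $m\ge1$ such that $p^m$ has strictly positive coefficients. (B) There is an integer $m\ge1$ such that $p^m$ has strictly positive coefficients, and $p(x)>0$ for some point $x\in\mathbb{R}_+^n$. (C) For every real form $q\in\mathbb{R}[x_1,\dots,x_n]$ with $q(x)>0$ for all $x\in\mathbb{R}_+^n\setminus\{0\}$, there exists a positive integer $m_0$ such that $p^m q$ has strictly positive coefficients for all integers $m\ge m_0$.
   Context: A form is a homogeneous polynomial. Multi-index notation: for $w=(w_1,\dots,w_n)\in\mathbb{Z}_{\ge0}^n$, $|w|=w_1+\cdots+w_n$ and $x^w=x_1^{w_1}\cdots x_n^{w_n}$. A form $p=\sum_{|w|=d}a_wx^w$ of degree $d$ (with $a_w\in\mathbb{R}$, the sum over all $w\in\mathbb{Z}_{\ge0}^n$ with $|w|=d$) is said to have strictly positive coefficients if $a_w>0$ for every $w\in\mathbb{Z}_{\ge0}^n$ with $|w|=d$ (i.e. every monomial of degree $d$ occurs with a positive coefficient). $\mathbb{R}_+^n=\{x\in\mathbb{R}^n: x_1,\dots,x_n\ge0\}$ is the closed positive orthant. *)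

theory Defs
  imports "HOL-Analysis.Analysis" "HOL-Library.Poly_Mapping"
begin

text \<open>Real polynomials in the variables indexed by the finite type 'n (so n = CARD('n) \<ge> 1),
  represented as finitely supported coefficient functions on multi-indices
  w :: 'n \<Rightarrow>0 nat (the monomial x^w). Ring operations (product, power) are the
  library's convolution structure on poly_mapping.\<close>

type_synonym 'n rpoly = "('n \<Rightarrow>\<^sub>0 nat) \<Rightarrow>\<^sub>0 real"

definition mdeg :: "('n::finite \<Rightarrow>\<^sub>0 nat) \<Rightarrow> nat" where
  "mdeg w = (\<Sum>i\<in>UNIV. Poly_Mapping.lookup w i)"

definition peval :: "'n::finite rpoly \<Rightarrow> ('n \<Rightarrow> real) \<Rightarrow> real" where
  "peval p x = (\<Sum>w\<in>Poly_Mapping.keys p. Poly_Mapping.lookup p w * (\<Prod>i\<in>UNIV. x i ^ Poly_Mapping.lookup w i))"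

definition is_form :: "'n::finite rpoly \<Rightarrow> nat \<Rightarrow> bool" where
  "is_form p d \<longleftrightarrow> (\<forall>w\<in>Poly_Mapping.keys p. mdeg w = d)"

definition strictly_pos_coeffs :: "'n::finite rpoly \<Rightarrow> bool" where
  "strictly_pos_coeffs p \<longleftrightarrow>
     (\<exists>d. is_form p d \<and> (\<forall>w. mdeg w = d \<longrightarrow> Poly_Mapping.lookup p w > 0))"

definition orthant :: "('n::finite \<Rightarrow> real) set" where
  "orthant = {x. \<forall>i. x i \<ge> 0}"

end

theory Submission
  imports Defs
begin


abbreviation lk :: "('a \<Rightarrow>\<^sub>0 'b::zero) \<Rightarrow> 'a \<Rightarrow> 'b" where "lk \<equiv> Poly_Mapping.lookup"

lemma lookup_mult_fin:
  fixes f g :: "('a::monoid_add) \<Rightarrow>\<^sub>0 'b::semiring_0"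
  assumes "finite A" "Poly_Mapping.keys f \<subseteq> A" "finite B" "Poly_Mapping.keys g \<subseteq> B"
  shows "lk (f * g) k = (\<Sum>a\<in>A. \<Sum>b\<in>B. if k = a + b then lk f a * lk g b else 0)"
proof -
  have inner: "(\<Sum>q. lk g q when k = l + q) = (\<Sum>b\<in>B. if k = l + b then lk g b else 0)" for l
    by (subst Sum_any.expand_superset[OF assms(3)]) (use assms(4) in \<open>auto simp: when_def in_keys_iff\<close>)
  have "lk (f * g) k = (\<Sum>l. lk f l * (\<Sum>b\<in>B. if k = l + b then lk g b else 0))"
    by (simp add: lookup_mult inner)
  also have "\<dots> = (\<Sum>a\<in>A. lk f a * (\<Sum>b\<in>B. if k = a + b then lk g b else 0))"
  proof (rule Sum_any.expand_superset[OF assms(1)])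
    show "{a. lk f a * (\<Sum>b\<in>B. if k = a + b then lk g b else 0) \<noteq> 0} \<subseteq> A"
    proof
      fix x assume "x \<in> {a. lk f a * (\<Sum>b\<in>B. if k = a + b then lk g b else 0) \<noteq> 0}"
      then have "lk f x \<noteq> 0" by auto
      then show "x \<in> A" using assms(2) by (auto simp: in_keys_iff)
    qed
  qed
  also have "\<dots> = (\<Sum>a\<in>A. \<Sum>b\<in>B. if k = a + b then lk f a * lk g b else 0)"
    by (simp add: sum_distrib_left if_distrib cong: if_cong)
  finally show ?thesis .
qed

lemma sum_singleton_eq: "(\<Sum>x\<in>{a}. f x) = f a" by simp

definition ple :: "('n \<Rightarrow>\<^sub>0 nat) \<Rightarrow> ('n \<Rightarrow>\<^sub>0 nat) \<Rightarrow> bool" where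
  "ple a v \<longleftrightarrow> (\<forall>i. lk a i \<le> lk v i)"

lemma add_eq_iff_ple: "(v = a + b) \<longleftrightarrow> (ple a v \<and> b = v - a)"
proof
  assume h: "v = a + b"
  have "ple a v" unfolding ple_def h by (simp add: lookup_add)
  moreover have "b = v - a" by (rule poly_mapping_eqI) (simp add: h lookup_add lookup_minus)
  ultimately show "ple a v \<and> b = v - a" by blast
next
  assume h: "ple a v \<and> b = v - a"
  show "v = a + b"
  proof (rule poly_mapping_eqI)
    fix i
    have "lk a i \<le> lk v i" using h unfolding ple_def by blast
    then show "lk v i = lk (a + b) i" using h by (simp add: lookup_add lookup_minus)
  qed
qed

lemma lookup_single_mult:
  fixes g :: "('n \<Rightarrow>\<^sub>0 nat) \<Rightarrow>\<^sub>0 real"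
  shows "lk (Poly_Mapping.single a c * g) v = (if ple a v then c * lk g (v - a) else 0)"
proof -
  have "lk (Poly_Mapping.single a c * g) v =
     (\<Sum>a'\<in>{a}. \<Sum>b\<in>Poly_Mapping.keys g. if v = a' + b then lk (Poly_Mapping.single a c) a' * lk g b else 0)"
    by (rule lookup_mult_fin) auto
  also have "\<dots> = (\<Sum>b\<in>Poly_Mapping.keys g. if b = v - a \<and> ple a v then c * lk g b else 0)"
    by (simp only: sum_singleton_eq lookup_single_eq) (rule sum.cong, auto simp: add_eq_iff_ple)
  also have "\<dots> = (if ple a v then c * lk g (v - a) else 0)"
    by (cases "ple a v") (auto simp: sum.delta' in_keys_iff)
  finally show ?thesis .
qed

lemma lookup_const_mult: 
  fixes g :: "('n \<Rightarrow>\<^sub>0 nat) \<Rightarrow>\<^sub>0 real"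
  shows "lk (Poly_Mapping.single 0 c * g) v = c * lk g v"
  by (simp add: lookup_single_mult ple_def)

lemma mdeg_add: "mdeg (a + b) = mdeg a + mdeg (b::'n::finite \<Rightarrow>\<^sub>0 nat)"
  by (simp add: mdeg_def lookup_add sum.distrib)

lemma mdeg_zero[simp]: "mdeg (0::'n::finite \<Rightarrow>\<^sub>0 nat) = 0"
  by (simp add: mdeg_def)

lemma mdeg_single[simp]: "mdeg (Poly_Mapping.single i k :: 'n::finite \<Rightarrow>\<^sub>0 nat) = k"
  by (simp add: mdeg_def lookup_single when_def)

lemma is_form_mult:
  fixes f g :: "'n::finite rpoly"
  assumes "is_form f a" "is_form g b" shows "is_form (f * g) (a + b)"
  using assms keys_mult[of f g] unfolding is_form_def by (force simp: mdeg_add)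

lemma is_form_one: "is_form (1::'n::finite rpoly) 0"
  by (simp add: is_form_def)

lemma is_form_power:
  fixes f :: "'n::finite rpoly"
  assumes "is_form f a" shows "is_form (f ^ m) (a * m)"
  by (induction m) (auto simp: is_form_one is_form_mult[OF assms] add.commute)

lemma is_form_add:
  fixes f g :: "'n::finite rpoly"
  assumes "is_form f a" "is_form g a" shows "is_form (f + g) a"
  using assms keys_add[of f g] unfolding is_form_def by blast

lemma is_form_sum:
  fixes f :: "'i \<Rightarrow> 'n::finite rpoly"
  assumes "\<And>i. i \<in> I \<Longrightarrow> is_form (f i) a" shows "is_form (sum f I) a"
  using assms keys_sum[of f I] unfolding is_form_def by blast

lemma is_form_const_mult:
  fixes g :: "'n::finite rpoly"
  assumes "is_form g a" shows "is_form (Poly_Mapping.single 0 c * g) a"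
proof -
  have "is_form (Poly_Mapping.single 0 c :: 'n rpoly) 0" by (simp add: is_form_def)
  from is_form_mult[OF this assms] show ?thesis by simp
qed

lemma is_form_lookup: "is_form f a \<Longrightarrow> mdeg w \<noteq> a \<Longrightarrow> lk f w = 0"
  unfolding is_form_def using in_keys_iff[of w f] by auto



definition mono :: "('n::finite \<Rightarrow>\<^sub>0 nat) \<Rightarrow> ('n \<Rightarrow> real) \<Rightarrow> real" where
  "mono w x = (\<Prod>i\<in>UNIV. x i ^ lk w i)"

lemma peval_mono: "peval p x = (\<Sum>w\<in>Poly_Mapping.keys p. lk p w * mono w x)"
  by (simp add: peval_def mono_def)

lemma peval_superset:
  assumes "finite A" "Poly_Mapping.keys p \<subseteq> A"
  shows "peval p x = (\<Sum>w\<in>A. lk p w * mono w x)"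
  unfolding peval_mono
  by (rule sum.mono_neutral_left[OF assms(1) assms(2)]) (auto simp: in_keys_iff)

lemma mono_add: "mono (a + b) x = mono a x * mono b x"
  by (simp add: mono_def lookup_add power_add prod.distrib)

lemma mono_zero[simp]: "mono 0 x = 1"
  by (simp add: mono_def)

lemma peval_mult: "peval (f * g) x = peval f x * peval (g :: 'n::finite rpoly) x"
proof -
  define A where "A = Poly_Mapping.keys f"
  define B where "B = Poly_Mapping.keys g"
  define C where "C = (\<lambda>(a,b). a + b) ` (A \<times> B)"
  have fA: "finite A" and fB: "finite B" unfolding A_def B_def by auto
  have fC: "finite C" unfolding C_def using fA fB by auto
  have kC: "Poly_Mapping.keys (f * g) \<subseteq> C"
    using keys_mult[of f g] unfolding C_def A_def B_def by auto
  have "peval (f * g) x = (\<Sum>k\<in>C. lk (f * g) k * mono k x)"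
    by (rule peval_superset[OF fC kC])
  also have "\<dots> = (\<Sum>k\<in>C. \<Sum>a\<in>A. \<Sum>b\<in>B. if k = a + b then lk f a * lk g b * mono k x else 0)"
  proof (intro sum.cong refl)
    fix k
    have eq: "\<And>P A m. (if P then A else 0) * m = (if P then A * m else (0::real))" by simp
    show "lk (f * g) k * mono k x = (\<Sum>a\<in>A. \<Sum>b\<in>B. if k = a + b then lk f a * lk g b * mono k x else 0)"
      by (simp add: lookup_mult_fin[OF fA _ fB] A_def B_def sum_distrib_right eq)
  qed
  also have "\<dots> = (\<Sum>a\<in>A. \<Sum>b\<in>B. \<Sum>k\<in>C. if k = a + b then lk f a * lk g b * mono k x else 0)"
    by (subst sum.swap) (subst (2) sum.swap, rule refl)
  also have "\<dots> = (\<Sum>a\<in>A. \<Sum>b\<in>B. lk f a * lk g b * mono (a + b) x)"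
  proof (intro sum.cong refl)
    fix a b assume "a \<in> A" "b \<in> B"
    then have "a + b \<in> C" unfolding C_def by auto
    then show "(\<Sum>k\<in>C. if k = a + b then lk f a * lk g b * mono k x else 0) = lk f a * lk g b * mono (a + b) x"
      using fC by (simp add: sum.delta')
  qed
  also have "\<dots> = (\<Sum>a\<in>A. lk f a * mono a x) * (\<Sum>b\<in>B. lk g b * mono b x)"
    by (simp add: sum_product mono_add mult_ac)
  also have "\<dots> = peval f x * peval g x"
    by (simp add: peval_mono A_def B_def)
  finally show ?thesis .
qed

lemma peval_one[simp]: "peval (1 :: 'n::finite rpoly) x = 1"
  by (simp add: peval_mono)

lemma peval_power: "peval (f ^ m) x = peval (f :: 'n::finite rpoly) x ^ m"
  by (induction m) (simp_all add: peval_mult)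

definition AP :: "'n::finite rpoly \<Rightarrow> nat \<Rightarrow> bool" where
  "AP f a \<longleftrightarrow> is_form f a \<and> (\<forall>w. mdeg w = a \<longrightarrow> lk f w > 0)"

definition NN :: "'n::finite rpoly \<Rightarrow> nat \<Rightarrow> bool" where
  "NN f a \<longleftrightarrow> is_form f a \<and> (\<forall>w. lk f w \<ge> 0)"

lemma spc_iff: "strictly_pos_coeffs f \<longleftrightarrow> (\<exists>a. AP f a)"
  by (simp add: strictly_pos_coeffs_def AP_def)

lemma AP_NN: "AP f a \<Longrightarrow> NN f a"
  unfolding AP_def NN_def
  by (metis is_form_lookup less_eq_real_def order_refl)

lemma AP_keys: "AP f a \<Longrightarrow> w \<in> Poly_Mapping.keys f \<longleftrightarrow> mdeg w = a"
  unfolding AP_def is_form_def using in_keys_iff[of w f] by force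

lemma split_exists:
  fixes v :: "'n::finite \<Rightarrow>\<^sub>0 nat"
  shows "a \<le> mdeg v \<Longrightarrow> \<exists>u. ple u v \<and> mdeg u = a"
proof (induction a)
  case 0 then show ?case by (intro exI[of _ 0]) (simp add: ple_def)
next
  case (Suc a)
  then obtain u where u: "ple u v" "mdeg u = a" by auto
  have "\<exists>i. lk u i < lk v i"
  proof (rule ccontr)
    assume "\<not> ?thesis"
    then have "\<And>i. lk v i \<le> lk u i" by (simp add: not_less)
    then have "mdeg v \<le> mdeg u" unfolding mdeg_def by (rule sum_mono)
    then show False using u Suc.prems by simp
  qed
  then obtain i where i: "lk u i < lk v i" by auto
  have "ple (u + Poly_Mapping.single i 1) v"
    using u(1) i unfolding ple_def by (auto simp: lookup_add lookup_single when_def Suc_le_eq)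
  moreover have "mdeg (u + Poly_Mapping.single i 1) = Suc a" by (simp add: mdeg_add u)
  ultimately show ?case by blast
qed

lemma mdeg_diff: "ple u v \<Longrightarrow> mdeg (v - u) = mdeg v - mdeg (u::'n::finite \<Rightarrow>\<^sub>0 nat)"
  using add_eq_iff_ple[of v u "v - u"] mdeg_add[of u "v - u"] by simp

lemma NN_mult:
  assumes "NN f a" "NN g b" shows "NN (f * g) (a + b)"
proof -
  have "lk (f * g) k \<ge> 0" for k
    using assms unfolding NN_def
    by (subst lookup_mult_fin[of "Poly_Mapping.keys f" _ "Poly_Mapping.keys g"]) (auto intro!: sum_nonneg)
  then show ?thesis using assms is_form_mult unfolding NN_def by blast
qed

lemma AP_mult:
  assumes f: "AP f a" and g: "AP g b" shows "AP (f * g) (a + b)"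
proof -
  have nf: "\<And>w. lk f w \<ge> 0" and ng: "\<And>w. lk g w \<ge> 0" using f g AP_NN NN_def by blast+
  have "lk (f * g) v > 0" if v: "mdeg v = a + b" for v
  proof -
    obtain u where u: "ple u v" "mdeg u = a" using split_exists[of a v] v by auto
    define w where "w = v - u"
    have vw: "v = u + w" using u add_eq_iff_ple w_def by blast
    have "mdeg v = mdeg u + mdeg w" using vw by (simp add: mdeg_add)
    then have mw: "mdeg w = b" using v u by simp
    have uk: "u \<in> Poly_Mapping.keys f" and wk: "w \<in> Poly_Mapping.keys g"
      using AP_keys[OF f] AP_keys[OF g] u mw by auto
    let ?T = "\<lambda>a' b'. if v = a' + b' then lk f a' * lk g b' else 0"
    have T0: "\<And>a' b'. ?T a' b' \<ge> 0" using nf ng by simp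
    have pos: "?T u w > 0" using vw f g u mw unfolding AP_def by simp
    have "?T u w \<le> (\<Sum>b'\<in>Poly_Mapping.keys g. ?T u b')"
      by (rule member_le_sum) (use wk T0 in auto)
    also have "\<dots> \<le> (\<Sum>a'\<in>Poly_Mapping.keys f. \<Sum>b'\<in>Poly_Mapping.keys g. ?T a' b')"
      by (rule member_le_sum[where f="\<lambda>a'. \<Sum>b'\<in>Poly_Mapping.keys g. ?T a' b'"]) (use uk T0 in \<open>auto intro: sum_nonneg\<close>)
    also have "\<dots> = lk (f * g) v"
      by (rule lookup_mult_fin[symmetric]) auto
    finally show ?thesis using pos by linarith
  qed
  then show ?thesis using f g is_form_mult unfolding AP_def by blast
qed

lemma NN_add: "NN f a \<Longrightarrow> NN g a \<Longrightarrow> NN (f + g) a"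
  unfolding NN_def using is_form_add by (auto simp: lookup_add)

lemma AP_add: "AP f a \<Longrightarrow> NN g a \<Longrightarrow> AP (f + g) a"
  unfolding AP_def NN_def using is_form_add
  by (auto simp: lookup_add add_pos_nonneg)

lemma NN_zero: "NN 0 a"
  by (simp add: NN_def is_form_def)

lemma NN_sum: "finite I \<Longrightarrow> (\<And>i. i \<in> I \<Longrightarrow> NN (f i) a) \<Longrightarrow> NN (sum f I) a"
  by (induction I rule: finite_induct) (auto simp: NN_zero NN_add)

lemma NN_const_mult: "c \<ge> 0 \<Longrightarrow> NN g a \<Longrightarrow> NN (Poly_Mapping.single 0 c * g) a"
  unfolding NN_def using is_form_const_mult by (auto simp: lookup_const_mult)

lemma AP_const_mult: "c > 0 \<Longrightarrow> AP g a \<Longrightarrow> AP (Poly_Mapping.single 0 c * g) a"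
  unfolding AP_def using is_form_const_mult by (auto simp: lookup_const_mult)

lemma AP_power: "AP f a \<Longrightarrow> AP (f ^ m) (a * m)"
proof (induction m)
  case 0 then show ?case
    by (simp add: AP_def is_form_one lookup_one mdeg_def when_def poly_mapping_eq_iff fun_eq_iff)
next
  case (Suc m) then show ?case using AP_mult[of f a "f ^ m" "a * m"] by simp
qed

lemma mono_single: "mono (Poly_Mapping.single i a) x = x i ^ a"
proof -
  have "\<And>j. x j ^ lk (Poly_Mapping.single i a) j = (if i = j then x i ^ a else 1)"
    by (simp add: lookup_single when_def)
  then show ?thesis unfolding mono_def by (simp add: prod.delta)
qed

lemma mono_nonneg: "x \<in> orthant \<Longrightarrow> mono w x \<ge> 0"
  unfolding mono_def orthant_def by (auto intro!: prod_nonneg)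

lemma peval_AP_pos:
  assumes f: "AP f a" and x: "x \<in> orthant" "x \<noteq> (\<lambda>_. 0)"
  shows "peval f x > 0"
proof -
  obtain i where i: "x i \<noteq> 0" using x(2) by auto
  then have xi: "x i > 0" using x(1) unfolding orthant_def by (simp add: less_le)
  let ?w = "Poly_Mapping.single i a"
  have wk: "?w \<in> Poly_Mapping.keys f" using AP_keys[OF f] by simp
  have t0: "\<And>w. w \<in> Poly_Mapping.keys f \<Longrightarrow> lk f w * mono w x \<ge> 0"
    using f mono_nonneg[OF x(1)] AP_NN NN_def by (meson mult_nonneg_nonneg)
  have "lk f ?w * mono ?w x > 0" using f xi unfolding AP_def by (simp add: mono_single)
  then show ?thesis unfolding peval_mono
    by (rule sum_pos2[OF finite_keys wk]) (use t0 in auto)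
qed

lemma peval_zero_point:
  assumes "is_form p d" "d \<ge> 1" shows "peval p (\<lambda>_. 0) = 0"
proof -
  have "mono w (\<lambda>_. 0) = 0" if "w \<in> Poly_Mapping.keys p" for w
  proof -
    have "mdeg w \<ge> 1" using assms that unfolding is_form_def by auto
    then obtain i where "lk w i \<noteq> 0" unfolding mdeg_def by (metis (no_types) not_one_le_zero sum.neutral)
    then show ?thesis unfolding mono_def by (intro prod_zero) auto
  qed
  then show ?thesis unfolding peval_mono by simp
qed



definition ei :: "'n \<Rightarrow> ('n \<Rightarrow>\<^sub>0 nat)" where
  "ei i = Poly_Mapping.single i 1"

lemma lookup_ei: "lk (ei i) j = (if i = j then 1 else 0)"
  by (simp add: ei_def lookup_single when_def)

lemma mdeg_ei[simp]: "mdeg (ei i :: 'n::finite \<Rightarrow>\<^sub>0 nat) = 1"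
  by (simp add: ei_def)

definition lin :: "'n::finite rpoly" where
  "lin = (\<Sum>i\<in>UNIV. Poly_Mapping.single (ei i) (1::real))"

definition ff :: "nat \<Rightarrow> nat \<Rightarrow> real" where
  "ff a b = (\<Prod>j<b. real a - real j)"

lemma ff_0[simp]: "ff a 0 = 1" by (simp add: ff_def)

lemma ff_Suc: "ff a (Suc b) = ff a b * (real a - real b)"
  by (simp add: ff_def)

lemma ff_SucSuc: "ff (Suc a) (Suc b) = real (Suc a) * ff a b"
  unfolding ff_def by (subst prod.lessThan_Suc_shift) simp

lemma ff_fact: "ff a a = fact a"
  by (induction a) (simp_all add: ff_SucSuc)

lemma ff_big: "a < b \<Longrightarrow> ff a b = 0"
  unfolding ff_def by (rule prod_zero) auto

lemma ff_key: "real (Suc a) * ff a b = (real (Suc a) - real b) * ff (Suc a) b"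
  using ff_SucSuc[of a b] ff_Suc[of "Suc a" b] by (simp add: mult_ac)

lemma ple_single_iff: "ple (ei i) v \<longleftrightarrow> 0 < lk v i"
  unfolding ple_def by (auto simp: lookup_ei)

lemma lookup_lin_mult:
  fixes g :: "'n::finite rpoly"
  shows "lk (lin * g) v = (\<Sum>i\<in>UNIV. if 0 < lk v i then lk g (v - ei i) else 0)"
  unfolding lin_def sum_distrib_right lookup_sum
  by (intro sum.cong refl) (simp add: lookup_single_mult ple_single_iff)

lemma lookup_diff_single:
  "lk (v - ei i) j = (if j = i then lk v i - 1 else lk v j)"
  by (simp add: lookup_minus lookup_ei)

lemma mdeg_diff_single: "0 < lk v i \<Longrightarrow> mdeg (v - ei i) = mdeg v - 1"
  using mdeg_diff[of "ei i" v] ple_single_iff[of i v] by simp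

lemma is_form_lin: "is_form (lin :: 'n::finite rpoly) 1"
  unfolding lin_def by (rule is_form_sum) (simp add: is_form_def)

lemma prod_fact_split:
  fixes v :: "'n::finite \<Rightarrow>\<^sub>0 nat"
  assumes "0 < lk v i"
  shows "(\<Prod>j\<in>UNIV. fact (lk v j) :: real) = real (lk v i) * (\<Prod>j\<in>UNIV. fact (lk (v - ei i) j))"
proof -
  have "(\<Prod>j\<in>UNIV. fact (lk v j) :: real) = fact (lk v i) * (\<Prod>j\<in>UNIV - {i}. fact (lk v j))"
    by (simp add: prod.remove)
  moreover have "(\<Prod>j\<in>UNIV. fact (lk (v - ei i) j) :: real)
      = fact (lk (v - ei i) i) * (\<Prod>j\<in>UNIV - {i}. fact (lk (v - ei i) j))"
    by (simp add: prod.remove)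
  moreover have "(\<Prod>j\<in>UNIV - {i}. fact (lk (v - ei i) j) :: real) = (\<Prod>j\<in>UNIV - {i}. fact (lk v j))"
    by (rule prod.cong) (auto simp: lookup_diff_single)
  moreover have "lk (v - ei i) i = lk v i - 1" by (simp add: lookup_diff_single)
  moreover have "(fact (lk v i) :: real) = real (lk v i) * fact (lk v i - 1)"
    using assms by (metis fact_reduce of_nat_fact of_nat_mult)
  ultimately show ?thesis by simp
qed

lemma prod_ff_split:
  fixes v u :: "'n::finite \<Rightarrow>\<^sub>0 nat"
  shows "(if 0 < lk v i then real (lk v i) * (\<Prod>j\<in>UNIV. ff (lk (v - ei i) j) (lk u j)) else 0)
     = (real (lk v i) - real (lk u i)) * (\<Prod>j\<in>UNIV. ff (lk v j) (lk u j))"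
proof (cases "0 < lk v i")
  case True
  then obtain a where a: "lk v i = Suc a" by (metis Suc_pred)
  have "(\<Prod>j\<in>UNIV. ff (lk (v - ei i) j) (lk u j)) = ff (lk (v - ei i) i) (lk u i) * (\<Prod>j\<in>UNIV - {i}. ff (lk (v - ei i) j) (lk u j))"
    by (simp add: prod.remove)
  also have "(\<Prod>j\<in>UNIV - {i}. ff (lk (v - ei i) j) (lk u j)) = (\<Prod>j\<in>UNIV - {i}. ff (lk v j) (lk u j))"
    by (rule prod.cong) (auto simp: lookup_diff_single)
  also have "lk (v - ei i) i = a" by (simp add: lookup_diff_single a)
  moreover have "(\<Prod>j\<in>UNIV. ff (lk v j) (lk u j)) = ff (Suc a) (lk u i) * (\<Prod>j\<in>UNIV - {i}. ff (lk v j) (lk u j))"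
    by (subst prod.remove[of UNIV i]) (simp_all add: a)
  ultimately show ?thesis using True ff_key[of a "lk u i"] by (simp add: a mult_ac)
next
  case False
  then have v0: "lk v i = 0" by simp
  show ?thesis
  proof (cases "lk u i = 0")
    case True then show ?thesis using v0 by simp
  next
    case False
    then have "ff (lk v i) (lk u i) = 0" using v0 by (intro ff_big) simp
    then have "(\<Prod>j\<in>UNIV. ff (lk v j) (lk u j)) = 0" by (intro prod_zero) auto
    then show ?thesis using v0 by simp
  qed
qed

definition Phi :: "'n::finite rpoly \<Rightarrow> ('n \<Rightarrow>\<^sub>0 nat) \<Rightarrow> real" where
  "Phi f v = (\<Sum>u\<in>Poly_Mapping.keys f. lk f u * (\<Prod>i\<in>UNIV. ff (lk v i) (lk u i)))"

lemma mdeg_zero_iff: "mdeg (w::'n::finite \<Rightarrow>\<^sub>0 nat) = 0 \<longleftrightarrow> w = 0"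
  unfolding mdeg_def by (auto simp: poly_mapping_eq_iff fun_eq_iff)

lemma base_term:
  fixes u v :: "'n::finite \<Rightarrow>\<^sub>0 nat"
  assumes "mdeg u = mdeg v"
  shows "(\<Prod>i\<in>UNIV. ff (lk v i) (lk u i)) = (if u = v then (\<Prod>i\<in>UNIV. fact (lk v i)) else 0)"
proof (cases "u = v")
  case True then show ?thesis by (simp add: ff_fact)
next
  case False
  have "\<exists>i. lk v i < lk u i"
  proof (rule ccontr)
    assume "\<not> ?thesis"
    then have p: "ple u v" unfolding ple_def by (simp add: not_less)
    then have "mdeg (v - u) = 0" using mdeg_diff[OF p] assms by simp
    then have "v - u = 0" by (simp add: mdeg_zero_iff)
    then have "v = u" using add_eq_iff_ple[of v u 0] p by simp
    then show False using False by simp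
  qed
  then obtain i where "lk v i < lk u i" by auto
  then have "ff (lk v i) (lk u i) = 0" by (rule ff_big)
  then have "(\<Prod>i\<in>UNIV. ff (lk v i) (lk u i)) = 0" by (intro prod_zero) auto
  then show ?thesis using False by simp
qed

lemma polya_coeff:
  fixes f :: "'n::finite rpoly"
  assumes f: "is_form f e"
  shows "mdeg v = N + e \<Longrightarrow> lk (lin ^ N * f) v * (\<Prod>i\<in>UNIV. fact (lk v i)) = fact N * Phi f v"
proof (induction N arbitrary: v)
  case 0
  have "Phi f v = (\<Sum>u\<in>Poly_Mapping.keys f. lk f u * (if u = v then (\<Prod>i\<in>UNIV. fact (lk v i)) else 0))"
    unfolding Phi_def
    by (intro sum.cong refl, subst base_term) (use f 0 in \<open>auto simp: is_form_def\<close>)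
  also have "\<dots> = lk f v * (\<Prod>i\<in>UNIV. fact (lk v i))"
    by (simp add: if_distrib sum.delta' in_keys_iff cong: if_cong)
  finally show ?case by simp
next
  case (Suc N)
  define G where "G = lin ^ N * f"
  have eqG: "lin ^ Suc N * f = lin * G" by (simp add: G_def mult.assoc)
  have "lk (lin ^ Suc N * f) v * (\<Prod>j\<in>UNIV. fact (lk v j))
     = (\<Sum>i\<in>UNIV. if 0 < lk v i then real (lk v i) * (lk G (v - ei i) * (\<Prod>j\<in>UNIV. fact (lk (v - ei i) j))) else 0)"
    unfolding eqG lookup_lin_mult sum_distrib_right
    by (intro sum.cong refl) (simp add: prod_fact_split mult_ac)
  also have "\<dots> = (\<Sum>i\<in>UNIV. if 0 < lk v i then real (lk v i) * (fact N * Phi f (v - ei i)) else 0)"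
  proof (intro sum.cong refl)
    fix i
    show "(if 0 < lk v i then real (lk v i) * (lk G (v - ei i) * (\<Prod>j\<in>UNIV. fact (lk (v - ei i) j))) else 0)
      = (if 0 < lk v i then real (lk v i) * (fact N * Phi f (v - ei i)) else 0)"
      using Suc.IH[of "v - ei i"] Suc.prems mdeg_diff_single[of v i]
      by (auto simp: G_def)
  qed
  also have "\<dots> = fact N * (\<Sum>u\<in>Poly_Mapping.keys f. lk f u *
       (\<Sum>i\<in>UNIV. if 0 < lk v i then real (lk v i) * (\<Prod>j\<in>UNIV. ff (lk (v - ei i) j) (lk u j)) else 0))"
  proof -
    let ?c = "\<lambda>i. 0 < lk v i"
    let ?P = "\<lambda>i u. (\<Prod>j\<in>UNIV. ff (lk (v - ei i) j) (lk u j))"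
    have "\<And>i. (if ?c i then real (lk v i) * (fact N * Phi f (v - ei i)) else 0)
       = fact N * (\<Sum>u\<in>Poly_Mapping.keys f. lk f u * (if ?c i then real (lk v i) * ?P i u else 0))"
      by (simp add: Phi_def sum_distrib_left mult_ac)
    then have "(\<Sum>i\<in>UNIV. if ?c i then real (lk v i) * (fact N * Phi f (v - ei i)) else 0)
       = fact N * (\<Sum>i\<in>UNIV. \<Sum>u\<in>Poly_Mapping.keys f. lk f u * (if ?c i then real (lk v i) * ?P i u else 0))"
      by (simp add: sum_distrib_left)
    also have "\<dots> = fact N * (\<Sum>u\<in>Poly_Mapping.keys f. \<Sum>i\<in>UNIV. lk f u * (if ?c i then real (lk v i) * ?P i u else 0))"
      by (subst sum.swap) (rule refl)
    also have "\<dots> = fact N * (\<Sum>u\<in>Poly_Mapping.keys f. lk f u * (\<Sum>i\<in>UNIV. if ?c i then real (lk v i) * ?P i u else 0))"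
      by (simp add: sum_distrib_left)
    finally show ?thesis .
  qed
  also have "\<dots> = fact N * (\<Sum>u\<in>Poly_Mapping.keys f. lk f u *
       ((\<Sum>i\<in>UNIV. real (lk v i) - real (lk u i)) * (\<Prod>j\<in>UNIV. ff (lk v j) (lk u j))))"
    by (simp add: prod_ff_split sum_distrib_right)
  also have "\<dots> = fact N * (\<Sum>u\<in>Poly_Mapping.keys f. lk f u * (real (Suc N) * (\<Prod>j\<in>UNIV. ff (lk v j) (lk u j))))"
  proof -
    have "(\<Sum>i\<in>UNIV. real (lk v i) - real (lk u i)) = real (Suc N)" if "u \<in> Poly_Mapping.keys f" for u
    proof -
      have "mdeg u = e" using f that unfolding is_form_def by auto
      then have "(\<Sum>i\<in>UNIV. real (lk v i)) - (\<Sum>i\<in>UNIV. real (lk u i)) = real (Suc N)"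
        using Suc.prems unfolding mdeg_def by (simp flip: of_nat_sum)
      then show ?thesis by (simp add: sum_subtractf)
    qed
    then show ?thesis by (intro arg_cong[where f="\<lambda>x. fact N * x"] sum.cong refl) simp
  qed
  also have "\<dots> = fact (Suc N) * Phi f v"
    unfolding Phi_def by (simp add: sum_distrib_left mult_ac)
  finally show ?case .
qed



definition FF :: "'n::finite rpoly \<Rightarrow> real \<Rightarrow> ('n \<Rightarrow> real) \<Rightarrow> real" where
  "FF f t z = (\<Sum>u\<in>Poly_Mapping.keys f. lk f u * (\<Prod>i\<in>UNIV. \<Prod>j<lk u i. z i - real j * t))"

lemma FF_0: "FF f 0 z = peval f z"
  by (simp add: FF_def peval_def)

lemma prod_scale: "(\<Prod>j<b. (M::real) * g j) = M ^ b * (\<Prod>j<b. g j)"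
  by (simp add: prod.distrib)

lemma Phi_scale:
  fixes f :: "'n::finite rpoly"
  assumes f: "is_form f e" and v: "mdeg v = M" and M: "M > 0"
  shows "Phi f v = real M ^ e * FF f (1 / real M) (\<lambda>i. real (lk v i) / real M)"
proof -
  have "(\<Prod>i\<in>UNIV. ff (lk v i) (lk u i)) = real M ^ e * (\<Prod>i\<in>UNIV. \<Prod>j<lk u i. real (lk v i) / real M - real j * (1 / real M))"
    if u: "u \<in> Poly_Mapping.keys f" for u
  proof -
    have mu: "mdeg u = e" using f u unfolding is_form_def by auto
    have "\<And>i j. real (lk v i) - real j = real M * (real (lk v i) / real M - real j * (1 / real M))"
      using M by (simp add: field_simps)
    then have "(\<Prod>i\<in>UNIV. ff (lk v i) (lk u i)) = (\<Prod>i\<in>UNIV. real M ^ lk u i * (\<Prod>j<lk u i. real (lk v i) / real M - real j * (1 / real M)))"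
      unfolding ff_def by (simp only: prod_scale)
    also have "\<dots> = (\<Prod>i\<in>UNIV. real M ^ lk u i) * (\<Prod>i\<in>UNIV. \<Prod>j<lk u i. real (lk v i) / real M - real j * (1 / real M))"
      by (rule prod.distrib)
    also have "(\<Prod>i\<in>UNIV. real M ^ lk u i) = real M ^ e"
      using mu unfolding mdeg_def by (metis power_sum)
    finally show ?thesis .
  qed
  then show ?thesis unfolding Phi_def FF_def by (simp add: sum_distrib_left mult_ac)
qed

definition stdsimp :: "('n::finite \<Rightarrow> real) set" where
  "stdsimp = {z. (\<forall>i. 0 \<le> z i) \<and> sum z UNIV = 1}"

lemma compact_simplex_vec:
  "compact {v :: real ^ 'n. (\<forall>i. 0 \<le> v $ i) \<and> sum (\<lambda>i. v $ i) UNIV = 1}" (is "compact ?S")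
proof (rule compact_eq_bounded_closed[THEN iffD2], rule conjI)
  show "bounded ?S"
  proof (rule bounded_iff[THEN iffD2], intro exI ballI)
    fix v assume v: "v \<in> ?S"
    have "norm v \<le> (\<Sum>i\<in>UNIV. \<bar>v $ i\<bar>)" by (rule norm_le_l1_cart)
    also have "\<dots> = 1" using v by simp
    finally show "norm v \<le> 1" .
  qed
  show "closed ?S"
    by (intro closed_Collect_conj closed_Collect_all closed_Collect_le closed_Collect_eq continuous_intros)
qed

lemma FF_small_t:
  fixes f :: "'n::finite rpoly"
  assumes pos: "\<And>z. z \<in> stdsimp \<Longrightarrow> FF f 0 z > 0"
  shows "\<exists>t0>0. \<forall>t z. 0 \<le> t \<longrightarrow> t < t0 \<longrightarrow> z \<in> stdsimp \<longrightarrow> FF f t z > 0"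
proof -
  define Dv where "Dv = {v :: real ^ 'n. (\<forall>i. 0 \<le> v $ i) \<and> sum (\<lambda>i. v $ i) UNIV = 1}"
  define Fv where "Fv = (\<lambda>p :: real \<times> (real ^ 'n). FF f (fst p) (\<lambda>i. snd p $ i))"
  have cont: "continuous_on UNIV Fv"
    unfolding Fv_def FF_def by (intro continuous_intros)
  define S where "S = {0..1::real} \<times> Dv"
  have cS: "compact S" unfolding S_def Dv_def by (intro compact_Times compact_Icc compact_simplex_vec)
  define K where "K = S \<inter> {p. Fv p \<le> 0}"
  have cK: "compact K" unfolding K_def
    by (intro compact_Int_closed cS closed_Collect_le cont continuous_on_const)
  have vecz: "(\<chi> i. z i) \<in> Dv" if "z \<in> stdsimp" for z
    using that unfolding Dv_def stdsimp_def by simp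
  have Dvz: "(\<lambda>i. v $ i) \<in> stdsimp" if "v \<in> Dv" for v
    using that unfolding Dv_def stdsimp_def by simp
  show ?thesis
  proof (cases "K = {}")
    case True
    show ?thesis
    proof (intro exI[of _ 1] conjI allI impI)
      fix t and z :: "'n \<Rightarrow> real" assume t: "0 \<le> t" "t < (1::real)" and z: "z \<in> stdsimp"
      have "(t, \<chi> i. z i) \<in> S" using t vecz[OF z] unfolding S_def by auto
      then have "Fv (t, \<chi> i. z i) > 0" using True unfolding K_def by auto
      moreover have "(\<lambda>i. (\<chi> i. z i) $ i) = z" by simp
      ultimately show "FF f t z > 0" unfolding Fv_def by simp
    qed simp
  next
    case False
    obtain p0 where p0: "p0 \<in> K" and mn: "\<And>p. p \<in> K \<Longrightarrow> fst p0 \<le> fst p"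
      using continuous_attains_inf[OF cK False continuous_on_fst[OF continuous_on_id]] by auto
    have p0S: "fst p0 \<in> {0..1}" "snd p0 \<in> Dv" and p0F: "Fv p0 \<le> 0"
      using p0 unfolding K_def S_def by (auto simp: mem_Times_iff)
    have "fst p0 \<noteq> 0"
    proof
      assume "fst p0 = 0"
      then have "Fv p0 = FF f 0 (\<lambda>i. snd p0 $ i)" unfolding Fv_def by simp
      moreover have "FF f 0 (\<lambda>i. snd p0 $ i) > 0" using pos Dvz[OF p0S(2)] by blast
      ultimately show False using p0F by simp
    qed
    then have t0pos: "fst p0 > 0" using p0S by auto
    show ?thesis
    proof (intro exI[of _ "fst p0"] conjI allI impI t0pos)
      fix t and z :: "'n \<Rightarrow> real" assume t: "0 \<le> t" "t < fst p0" and z: "z \<in> stdsimp"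
      have "(t, \<chi> i. z i) \<in> S" using t p0S vecz[OF z] unfolding S_def by auto
      moreover have "(t, \<chi> i. z i) \<notin> K" using mn[of "(t, \<chi> i. z i)"] t by auto
      ultimately have "Fv (t, \<chi> i. z i) > 0" unfolding K_def by auto
      moreover have "(\<lambda>i. (\<chi> i. z i) $ i) = z" by simp
      ultimately show "FF f t z > 0" unfolding Fv_def by simp
    qed
  qed
qed

lemma polya:
  fixes f :: "'n::finite rpoly"
  assumes f: "is_form f e" and pos: "\<forall>x\<in>orthant - {\<lambda>_. 0}. peval f x > 0"
  shows "\<exists>N0. \<forall>N\<ge>N0. AP (lin ^ N * f) (N + e)"
proof -
  have "FF f 0 z > 0" if "z \<in> stdsimp" for z
  proof -
    have "z \<in> orthant" using that unfolding stdsimp_def orthant_def by auto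
    moreover have "z \<noteq> (\<lambda>_. 0)" using that unfolding stdsimp_def by auto
    ultimately have "peval f z > 0" using pos by auto
    then show ?thesis by (simp add: FF_0)
  qed
  then obtain t0 where t0: "t0 > 0" and tp: "\<And>t z. 0 \<le> t \<Longrightarrow> t < t0 \<Longrightarrow> z \<in> stdsimp \<Longrightarrow> FF f t z > 0"
    using FF_small_t by blast
  define N0 where "N0 = nat \<lceil>1 / t0\<rceil> + 1"
  have "AP (lin ^ N * f) (N + e)" if N: "N \<ge> N0" for N
  proof -
    have form: "is_form (lin ^ N * f) (N + e)"
      using is_form_mult[OF is_form_power[OF is_form_lin] f, of N] by simp
    define M where "M = N + e"
    have h1: "real N0 > 1 / t0" unfolding N0_def by linarith
    have h2: "N0 \<ge> 1" unfolding N0_def by simp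
    from h1 h2 have MM: "real M > 1 / t0" "M > 0" using N unfolding M_def by auto
    then have tM: "1 / real M < t0" using t0 by (simp add: divide_less_eq field_simps)
    have "lk (lin ^ N * f) v > 0" if v: "mdeg v = N + e" for v
    proof -
      let ?z = "\<lambda>i. real (lk v i) / real M"
      have zs: "?z \<in> stdsimp"
      proof -
        have "(\<Sum>i\<in>UNIV. real (lk v i)) = real M" using v unfolding mdeg_def M_def by (simp flip: of_nat_sum)
        then show ?thesis using MM unfolding stdsimp_def by (simp add: sum_divide_distrib[symmetric])
      qed
      have FFp: "FF f (1 / real M) ?z > 0" using tp[OF _ tM zs] by simp
      have "lk (lin ^ N * f) v * (\<Prod>i\<in>UNIV. fact (lk v i)) = fact N * (real M ^ e * FF f (1 / real M) ?z)"
        using polya_coeff[OF f v] Phi_scale[OF f _ MM(2), of v] v unfolding M_def by simp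
      moreover have "fact N * (real M ^ e * FF f (1 / real M) ?z) > 0"
        using FFp MM by simp
      moreover have "(\<Prod>i\<in>UNIV. fact (lk v i) :: real) > 0" by (intro prod_pos) simp
      ultimately show ?thesis by (metis zero_less_mult_pos2)
    qed
    then show ?thesis using form unfolding AP_def by blast
  qed
  then show ?thesis by blast
qed



lemma is_form_iff: "is_form f a \<longleftrightarrow> (\<forall>w. mdeg w \<noteq> a \<longrightarrow> lk f w = 0)"
proof
  assume "is_form f a" then show "\<forall>w. mdeg w \<noteq> a \<longrightarrow> lk f w = 0" using is_form_lookup by blast
next
  assume h: "\<forall>w. mdeg w \<noteq> a \<longrightarrow> lk f w = 0"
  show "is_form f a" unfolding is_form_def
  proof
    fix w assume "w \<in> Poly_Mapping.keys f"
    then have "lk f w \<noteq> 0" by (simp add: in_keys_iff)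
    then show "mdeg w = a" using h by blast
  qed
qed

lemma single0_power: "(Poly_Mapping.single 0 a :: 'n::finite rpoly) ^ k = Poly_Mapping.single 0 (a ^ k)"
proof (induction k)
  case 0 then show ?case by simp
next
  case (Suc k)
  have "Poly_Mapping.single 0 a * Poly_Mapping.single 0 (a ^ k) = (Poly_Mapping.single (0 + 0) (a * a ^ k) :: 'n rpoly)"
    by (rule mult_single)
  then show ?case using Suc by simp
qed

lemma of_nat_pm: "(of_nat n :: 'n::finite rpoly) = Poly_Mapping.single 0 (real n)"
  by simp

lemma NN_one: "NN (1 :: 'n::finite rpoly) 0"
  by (simp add: NN_def is_form_one lookup_one when_def)

lemma NN_power: "NN f a \<Longrightarrow> NN (f ^ m) (a * m)"
proof (induction m)
  case 0 then show ?case by (simp add: NN_one)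
next
  case (Suc m) then show ?case using NN_mult[of f a "f ^ m" "a * m"] by simp
qed

lemma NN_lin: "NN (lin :: 'n::finite rpoly) 1"
  unfolding NN_def using is_form_lin
  by (auto simp: lin_def lookup_sum lookup_single when_def intro!: sum_nonneg)

lemma AP_sum:
  assumes "finite I" "j \<in> I" "AP (T j) a" "\<And>k. k \<in> I \<Longrightarrow> k \<noteq> j \<Longrightarrow> NN (T k) a"
  shows "AP (sum T I) a"
proof -
  have "sum T I = T j + sum T (I - {j})" using assms by (simp add: sum.remove)
  moreover have "NN (sum T (I - {j})) a" using assms by (intro NN_sum) auto
  ultimately show ?thesis using AP_add assms(3) by simp
qed

lemma AP_min:
  fixes g :: "'n::finite rpoly"
  assumes "AP g a" shows "\<exists>\<beta>>0. \<forall>v. mdeg v = a \<longrightarrow> lk g v \<ge> \<beta>"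
proof -
  let ?w = "Poly_Mapping.single (undefined::'n) a"
  have ne: "?w \<in> Poly_Mapping.keys g" using AP_keys[OF assms] by simp
  define \<beta> where "\<beta> = Min (lk g ` Poly_Mapping.keys g)"
  have "\<beta> \<in> lk g ` Poly_Mapping.keys g" unfolding \<beta>_def using ne by (intro Min_in) auto
  then have "\<beta> > 0" using assms AP_keys[OF assms] unfolding AP_def by auto
  moreover have "lk g v \<ge> \<beta>" if "mdeg v = a" for v
    unfolding \<beta>_def using that AP_keys[OF assms] by (intro Min_le) auto
  ultimately show ?thesis by blast
qed

lemma coeff_bound:
  fixes h :: "nat \<Rightarrow> 'n::finite rpoly"
  shows "\<exists>H\<ge>0. \<forall>k<n. \<forall>v. \<bar>lk (h k) v\<bar> \<le> H"
proof -
  define H where "H = (\<Sum>k<n. \<Sum>w\<in>Poly_Mapping.keys (h k). \<bar>lk (h k) w\<bar>)"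
  have "\<bar>lk (h k) v\<bar> \<le> H" if k: "k < n" for k v
  proof (cases "v \<in> Poly_Mapping.keys (h k)")
    case True
    have "\<bar>lk (h k) v\<bar> \<le> (\<Sum>w\<in>Poly_Mapping.keys (h k). \<bar>lk (h k) w\<bar>)"
      using True by (intro member_le_sum) auto
    also have "\<dots> \<le> H" unfolding H_def
      by (rule member_le_sum[where f="\<lambda>k. \<Sum>w\<in>Poly_Mapping.keys (h k). \<bar>lk (h k) w\<bar>"]) (use k in \<open>auto intro: sum_nonneg\<close>)
    finally show ?thesis .
  next
    case False
    then have "lk (h k) v = 0" by (simp add: in_keys_iff)
    moreover have "H \<ge> 0" unfolding H_def by (intro sum_nonneg) auto
    ultimately show ?thesis by simp
  qed
  moreover have "H \<ge> 0" unfolding H_def by (intro sum_nonneg) auto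
  ultimately show ?thesis by blast
qed

lemma binom_domination:
  fixes \<beta> H :: real
  assumes i0: "i0 = Suc j" and b: "\<beta> > 0" and H: "H \<ge> 0"
  shows "\<exists>N1. \<forall>N\<ge>N1. H * (\<Sum>k<i0. real (N choose k)) \<le> \<beta> * real (N choose i0)"
proof -
  define N1 where "N1 = max i0 (nat \<lceil>H * real i0 ^ Suc i0 / \<beta>\<rceil>) + 1"
  have "H * (\<Sum>k<i0. real (N choose k)) \<le> \<beta> * real (N choose i0)" if N: "N \<ge> N1" for N
  proof -
    have N1: "N \<ge> 1" "N \<ge> i0" using N unfolding N1_def by auto
    have "real N \<ge> H * real i0 ^ Suc i0 / \<beta>" using N unfolding N1_def by linarith
    then have Nb: "\<beta> * real N \<ge> H * real i0 ^ Suc i0" using b by (simp add: field_simps)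
    have "(\<Sum>k<i0. real (N choose k)) \<le> (\<Sum>k<i0. real N ^ j)"
    proof (rule sum_mono)
      fix k assume k: "k \<in> {..<i0}"
      have "N choose k \<le> N ^ k" using k N1 by (intro binomial_le_pow) auto
      then have "real (N choose k) \<le> real N ^ k" by (metis of_nat_le_iff of_nat_power)
      also have "\<dots> \<le> real N ^ j" using k N1 i0 by (intro power_increasing) auto
      finally show "real (N choose k) \<le> real N ^ j" .
    qed
    also have "\<dots> = real i0 * real N ^ j" by simp
    finally have s: "(\<Sum>k<i0. real (N choose k)) \<le> real i0 * real N ^ j" .
    have c: "(real N / real i0) ^ i0 \<le> real (N choose i0)" using N1 by (intro binomial_ge_n_over_k_pow_k) auto
    have i0p: "real i0 > 0" using i0 by simp
    have "H * (\<Sum>k<i0. real (N choose k)) \<le> H * (real i0 * real N ^ j)" using s H by (intro mult_left_mono)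
    also have "\<dots> = (H * real i0 ^ Suc i0) * real N ^ j / real i0 ^ i0"
      using i0p by (simp add: field_simps)
    also have "\<dots> \<le> (\<beta> * real N) * real N ^ j / real i0 ^ i0"
      using Nb i0p by (intro divide_right_mono mult_right_mono) auto
    also have "\<dots> = \<beta> * (real N / real i0) ^ i0"
      using i0 by (simp add: power_divide field_simps)
    also have "\<dots> \<le> \<beta> * real (N choose i0)" using c b by (intro mult_left_mono) auto
    finally show ?thesis .
  qed
  then show ?thesis by blast
qed

lemma split_P:
  fixes P S :: "'n::finite rpoly"
  assumes P: "AP P D" and S: "NN S D"
  shows "\<exists>c>0. NN (P - Poly_Mapping.single 0 c * S) D"
proof -
  obtain \<beta> where b: "\<beta> > 0" "\<And>v. mdeg v = D \<Longrightarrow> lk P v \<ge> \<beta>" using AP_min[OF P] by blast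
  obtain H where H: "H \<ge> 0" "\<And>v. \<bar>lk S v\<bar> \<le> H" using coeff_bound[of 1 "\<lambda>_. S"] by auto
  define c where "c = \<beta> / (H + 1)"
  have c: "c > 0" unfolding c_def using b H by simp
  have "lk (P - Poly_Mapping.single 0 c * S) v \<ge> 0" for v
  proof (cases "mdeg v = D")
    case True
    have "c * lk S v \<le> c * (H + 1)" using H(2)[of v] c by (intro mult_left_mono) auto
    also have "\<dots> = \<beta>" unfolding c_def using H by simp
    finally show ?thesis using b(2)[OF True] by (simp add: lookup_minus lookup_const_mult)
  next
    case False
    have "lk P v = 0" "lk S v = 0" using P S False unfolding AP_def NN_def by (auto intro: is_form_lookup)
    then show ?thesis by (simp add: lookup_minus lookup_const_mult)
  qed
  moreover have "is_form (P - Poly_Mapping.single 0 c * S) D"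
    using P S unfolding AP_def NN_def is_form_iff by (simp add: lookup_minus lookup_const_mult)
  ultimately show ?thesis using c unfolding NN_def by blast
qed



lemma NN_deg: "NN f a \<Longrightarrow> a = b \<Longrightarrow> NN f b" by simp
lemma AP_deg: "AP f a \<Longrightarrow> a = b \<Longrightarrow> AP f b" by simp

lemma KL:
  fixes P f :: "'n::finite rpoly"
  assumes P: "AP P D" and D: "D \<ge> 1" and f: "is_form f e"
    and pos: "\<forall>x\<in>orthant - {\<lambda>_. 0}. peval f x > 0"
  shows "\<exists>N1. \<forall>N\<ge>N1. AP (P ^ N * f) (D * N + e)"
proof -
  obtain N0 where N0: "\<And>n. n \<ge> N0 \<Longrightarrow> AP (lin ^ n * f) (n + e)" using polya[OF f pos] by blast
  define S where "S = (lin :: 'n rpoly) ^ D"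
  have NNS: "NN S D" unfolding S_def using NN_power[OF NN_lin, of D] by simp
  have gAP: "AP (S ^ k * f) (D * k + e)" if k: "k \<ge> N0" for k
  proof -
    have "S ^ k = lin ^ (D * k)" unfolding S_def by (simp add: power_mult)
    moreover have "D * k \<ge> N0"
    proof -
      have "k \<le> D * k" using D by simp
      then show ?thesis using k by linarith
    qed
    ultimately show ?thesis using N0 by simp
  qed
  have gform: "is_form (S ^ k * f) (D * k + e)" for k
  proof -
    have "is_form (S ^ k * f) (D * k + e)"
      by (rule is_form_mult[OF is_form_power[OF NNS[unfolded NN_def, THEN conjunct1]] f])
    then show ?thesis .
  qed
  obtain c where c: "c > 0" and NNR: "NN (P - Poly_Mapping.single 0 c * S) D"
    using split_P[OF P NNS] by blast
  define C where "C = (Poly_Mapping.single 0 c :: 'n rpoly)"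
  define R where "R = P - C * S"
  have NNR': "NN R D" using NNR unfolding R_def C_def .
  have Rform: "is_form R D" using NNR' unfolding NN_def by simp
  have PR: "P = C * S + R" unfolding R_def by simp
  define i0 where "i0 = Suc N0"
  define T where "T N k = Poly_Mapping.single 0 (real (N choose k) * c ^ k) * (R ^ (N - k) * (S ^ k * f))" for N k
  have expand: "P ^ N * f = (\<Sum>k\<le>N. T N k)" for N
  proof -
    have "P ^ N * f = (\<Sum>k\<le>N. of_nat (N choose k) * (C * S) ^ k * R ^ (N - k) * f)"
      unfolding PR binomial_ring sum_distrib_right ..
    also have "\<dots> = (\<Sum>k\<le>N. T N k)"
    proof (intro sum.cong refl)
      fix k
      have "of_nat (N choose k) * (C * S) ^ k * R ^ (N - k) * f
          = (Poly_Mapping.single 0 (real (N choose k)) * Poly_Mapping.single 0 (c ^ k)) * (R ^ (N - k) * (S ^ k * f))"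
        by (simp only: of_nat_pm power_mult_distrib C_def single0_power mult_ac)
      also have "Poly_Mapping.single 0 (real (N choose k)) * Poly_Mapping.single 0 (c ^ k) = (Poly_Mapping.single (0 + 0) (real (N choose k) * c ^ k) :: 'n rpoly)"
        by (rule mult_single)
      finally show "of_nat (N choose k) * (C * S) ^ k * R ^ (N - k) * f = T N k" unfolding T_def by simp
    qed
    finally show ?thesis .
  qed
  define h where "h k = Poly_Mapping.single 0 (c ^ k) * (R ^ (i0 - k) * (S ^ k * f))" for k
  define B where "B N = (\<Sum>k\<le>i0. Poly_Mapping.single 0 (real (N choose k)) * h k)" for N
  have low: "(\<Sum>k\<le>i0. T N k) = R ^ (N - i0) * B N" if N: "N \<ge> i0" for N
  proof -
    have "T N k = R ^ (N - i0) * (Poly_Mapping.single 0 (real (N choose k)) * h k)" if k: "k \<le> i0" for k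
    proof -
      have "R ^ (N - k) = R ^ (N - i0) * R ^ (i0 - k)"
        using k N by (simp flip: power_add)
      moreover have "Poly_Mapping.single 0 (real (N choose k) * c ^ k) = Poly_Mapping.single 0 (real (N choose k)) * (Poly_Mapping.single 0 (c ^ k) :: 'n rpoly)"
        by (simp only: mult_single add.left_neutral)
      ultimately show ?thesis unfolding T_def h_def by (simp add: mult_ac)
    qed
    then show ?thesis unfolding B_def sum_distrib_left by (intro sum.cong) auto
  qed
  have hform: "is_form (h k) (D * i0 + e)" if k: "k \<le> i0" for k
  proof -
    have "is_form (R ^ (i0 - k) * (S ^ k * f)) (D * (i0 - k) + (D * k + e))"
      by (intro is_form_mult is_form_power Rform gform)
    moreover have "D * (i0 - k) + (D * k + e) = D * i0 + e" using k by (simp add: diff_mult_distrib2)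
    ultimately show ?thesis unfolding h_def using is_form_const_mult by metis
  qed
  have hAP: "AP (h i0) (D * i0 + e)"
    unfolding h_def using AP_const_mult[OF _ gAP[of i0]] c i0_def by simp
  obtain \<beta> where b: "\<beta> > 0" "\<And>v. mdeg v = D * i0 + e \<Longrightarrow> lk (h i0) v \<ge> \<beta>"
    using AP_min[OF hAP] by blast
  obtain H where H: "H \<ge> 0" "\<And>k v. k < i0 \<Longrightarrow> \<bar>lk (h k) v\<bar> \<le> H"
    using coeff_bound[of i0 h] by blast
  obtain N1 where N1: "\<And>N. N \<ge> N1 \<Longrightarrow> H * (\<Sum>k<i0. real (N choose k)) \<le> \<beta> * real (N choose i0)"
    using binom_domination[OF i0_def b(1) H(1)] by blast
  have BNN: "NN (B N) (D * i0 + e)" if N: "N \<ge> N1" for N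
  proof -
    have form: "is_form (B N) (D * i0 + e)"
      unfolding B_def by (intro is_form_sum is_form_const_mult hform) auto
    have "lk (B N) v \<ge> 0" for v
    proof (cases "mdeg v = D * i0 + e")
      case False
      then show ?thesis using form is_form_lookup by (metis order_refl)
    next
      case True
      have "lk (B N) v = (\<Sum>k\<le>i0. real (N choose k) * lk (h k) v)"
        unfolding B_def lookup_sum by (simp only: lookup_const_mult)
      also have "\<dots> = real (N choose i0) * lk (h i0) v + (\<Sum>k<i0. real (N choose k) * lk (h k) v)"
        by (simp add: lessThan_Suc_atMost[symmetric])
      finally have eq: "lk (B N) v = real (N choose i0) * lk (h i0) v + (\<Sum>k<i0. real (N choose k) * lk (h k) v)" .
      have "(\<Sum>k<i0. real (N choose k) * lk (h k) v) \<ge> - (\<Sum>k<i0. real (N choose k) * H)"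
      proof -
        have "(\<Sum>k<i0. - (real (N choose k) * H)) \<le> (\<Sum>k<i0. real (N choose k) * lk (h k) v)"
        proof (rule sum_mono)
          fix k assume "k \<in> {..<i0}"
          then have "\<bar>lk (h k) v\<bar> \<le> H" using H(2) by auto
          then have "- H \<le> lk (h k) v" by linarith
          then show "- (real (N choose k) * H) \<le> real (N choose k) * lk (h k) v"
            by (metis mult_left_mono mult_minus_right of_nat_0_le_iff)
        qed
        then show ?thesis by (simp add: sum_negf)
      qed
      moreover have "real (N choose i0) * lk (h i0) v \<ge> real (N choose i0) * \<beta>"
        using b(2)[OF True] by (intro mult_left_mono) auto
      moreover have "(\<Sum>k<i0. real (N choose k) * H) \<le> \<beta> * real (N choose i0)"
        using N1[OF N] by (simp add: sum_distrib_left mult.commute)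
      ultimately show ?thesis using eq by (simp add: mult_ac)
    qed
    then show ?thesis using form unfolding NN_def by blast
  qed
  have "AP (P ^ N * f) (D * N + e)" if N: "N \<ge> max N1 (Suc i0)" for N
  proof -
    have split: "{..N} = {..i0} \<union> {i0<..N}" using N by auto
    have "P ^ N * f = (\<Sum>k\<le>i0. T N k) + (\<Sum>k\<in>{i0<..N}. T N k)"
      unfolding expand split by (rule sum.union_disjoint) auto
    also have "\<dots> = R ^ (N - i0) * B N + (\<Sum>k\<in>{i0<..N}. T N k)"
      using N low by simp
    finally have eq: "P ^ N * f = (\<Sum>k\<in>{i0<..N}. T N k) + R ^ (N - i0) * B N" by simp
    have NNlow: "NN (R ^ (N - i0) * B N) (D * N + e)"
    proof -
      have "NN (R ^ (N - i0) * B N) (D * (N - i0) + (D * i0 + e))"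
        by (intro NN_mult NN_power NNR' BNN) (use N in auto)
      moreover have "D * (N - i0) + (D * i0 + e) = D * N + e" using N by (simp add: diff_mult_distrib2)
      ultimately show ?thesis by simp
    qed
    have Tdeg: "D * (N - k) + (D * k + e) = D * N + e" if "k \<le> N" for k
      using that by (simp add: diff_mult_distrib2)
    have TNN: "NN (T N k) (D * N + e)" if k: "k \<in> {i0<..N}" for k
    proof -
      have "NN (R ^ (N - k) * (S ^ k * f)) (D * (N - k) + (D * k + e))"
        by (intro NN_mult NN_power NNR' AP_NN gAP) (use k i0_def in auto)
      moreover have "D * (N - k) + (D * k + e) = D * N + e" using Tdeg k by simp
      ultimately have "NN (R ^ (N - k) * (S ^ k * f)) (D * N + e)" by simp
      then show ?thesis unfolding T_def using c by (intro NN_const_mult) auto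
    qed
    have TAP: "AP (T N N) (D * N + e)"
    proof -
      have "AP (S ^ N * f) (D * N + e)" using gAP N i0_def by simp
      then show ?thesis unfolding T_def using c by (intro AP_const_mult) auto
    qed
    have "AP (\<Sum>k\<in>{i0<..N}. T N k) (D * N + e)"
      using AP_sum[of "{i0<..N}" N "T N" "D * N + e"] TAP TNN N by auto
    then show ?thesis unfolding eq using AP_add NNlow by blast
  qed
  then show ?thesis by blast
qed



lemma spc_deg:
  fixes p :: "'n::finite rpoly"
  assumes form: "is_form p d" and s: "strictly_pos_coeffs (p ^ m)"
  shows "AP (p ^ m) (d * m)"
proof -
  obtain a where a: "AP (p ^ m) a" using s spc_iff by blast
  have "Poly_Mapping.single (undefined::'n) a \<in> Poly_Mapping.keys (p ^ m)" using AP_keys[OF a] by simp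
  moreover have "is_form (p ^ m) (d * m)" by (rule is_form_power[OF form])
  ultimately have "a = d * m" unfolding is_form_def by auto
  then show ?thesis using a by simp
qed

lemma pos_odd:
  fixes p :: "'n::finite rpoly"
  assumes "odd m" "AP (p ^ m) a"
  shows "\<forall>x\<in>orthant - {\<lambda>_. 0}. peval p x > 0"
proof
  fix x :: "'n \<Rightarrow> real" assume x: "x \<in> orthant - {\<lambda>_. 0}"
  have "peval (p ^ m) x > 0" using peval_AP_pos[OF assms(2)] x by auto
  then have "peval p x ^ m > 0" by (simp add: peval_power)
  then show "peval p x > 0" using assms(1) by (auto simp: zero_less_power_eq)
qed

lemma pos_from_point:
  fixes p :: "'n::finite rpoly"
  assumes form: "is_form p d" and d: "d \<ge> 1" and m: "m \<ge> 1" and ap: "AP (p ^ m) a"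
    and x0: "x0 \<in> orthant" "peval p x0 > 0"
  shows "\<forall>y\<in>orthant - {\<lambda>_. 0}. peval p y > 0"
proof (rule ballI, rule ccontr)
  fix y :: "'n \<Rightarrow> real" assume y: "y \<in> orthant - {\<lambda>_. 0}" and ny: "\<not> peval p y > 0"
  define g where "g t = peval p (\<lambda>i. (1 - t) * x0 i + t * y i)" for t
  have g0: "g 0 > 0" using x0 unfolding g_def by simp
  have g1: "g 1 \<le> 0" using ny unfolding g_def by simp
  have cont: "\<forall>t. 0 \<le> t \<and> t \<le> 1 \<longrightarrow> isCont g t"
    unfolding g_def peval_def by (intro allI impI continuous_intros)
  obtain t where t: "0 \<le> t" "t \<le> 1" "g t = 0" using IVT2[of g 1 0 0, OF g1 _ _ cont] g0 by auto
  define z where "z = (\<lambda>i. (1 - t) * x0 i + t * y i)"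
  have zo: "z \<in> orthant" using x0(1) y t unfolding z_def orthant_def by auto
  have x0nz: "x0 \<noteq> (\<lambda>_. 0)" using x0(2) peval_zero_point[OF form d] by auto
  have "z \<noteq> (\<lambda>_. 0)"
  proof
    assume z0: "z = (\<lambda>_. 0)"
    have AI: "\<forall>i. (1 - t) * x0 i = 0 \<and> t * y i = 0"
    proof
      fix i
      have "(1 - t) * x0 i + t * y i = 0" using fun_cong[OF z0, of i] unfolding z_def by simp
      moreover have "(1 - t) * x0 i \<ge> 0" "t * y i \<ge> 0" using x0(1) y t unfolding orthant_def by auto
      ultimately show "(1 - t) * x0 i = 0 \<and> t * y i = 0" by linarith
    qed
    then show False
    proof (cases "t = 1")
      case True
      then have "y = (\<lambda>_. 0)" using AI by auto
      then show False using y by simp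
    next
      case False
      then have "x0 = (\<lambda>_. 0)" using AI t by auto
      then show False using x0nz by simp
    qed
  qed
  then have "peval (p ^ m) z > 0" using peval_AP_pos[OF ap zo] by simp
  moreover have "peval (p ^ m) z = 0" using t(3) m unfolding g_def z_def by (simp add: peval_power)
  ultimately show False by simp
qed



theorem theorem1p1:
  fixes p :: "'n::finite rpoly"
  assumes form: "is_form p d" and nonconst: "d \<ge> 1" and nz: "p \<noteq> 0"
  shows "((\<exists>m::nat. odd m \<and> strictly_pos_coeffs (p ^ m))
          \<longleftrightarrow> ((\<exists>m::nat. m \<ge> 1 \<and> strictly_pos_coeffs (p ^ m)) \<and>
               (\<exists>x\<in>orthant. peval p x > 0)))
       \<and> ((\<exists>m::nat. odd m \<and> strictly_pos_coeffs (p ^ m))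
          \<longleftrightarrow> (\<forall>q :: 'n rpoly. (\<exists>e. is_form q e) \<and> (\<forall>x\<in>orthant - {\<lambda>_. 0}. peval q x > 0) \<longrightarrow>
                 (\<exists>m0::nat. m0 \<ge> 1 \<and> (\<forall>m\<ge>m0. strictly_pos_coeffs (p ^ m * q)))))"
proof -
  let ?A = "\<exists>m::nat. odd m \<and> strictly_pos_coeffs (p ^ m)"
  let ?B = "(\<exists>m::nat. m \<ge> 1 \<and> strictly_pos_coeffs (p ^ m)) \<and> (\<exists>x\<in>orthant. peval p x > 0)"
  let ?C = "\<forall>q :: 'n rpoly. (\<exists>e. is_form q e) \<and> (\<forall>x\<in>orthant - {\<lambda>_. 0}. peval q x > 0) \<longrightarrow>
                 (\<exists>m0::nat. m0 \<ge> 1 \<and> (\<forall>m\<ge>m0. strictly_pos_coeffs (p ^ m * q)))"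
  have AB: "?B" if A: ?A
  proof -
    obtain m where m: "odd m" "strictly_pos_coeffs (p ^ m)" using A by blast
    have pos: "\<forall>x\<in>orthant - {\<lambda>_. 0}. peval p x > 0" using pos_odd[OF m(1) spc_deg[OF form m(2)]] .
    have "(\<lambda>_. 1::real) \<in> orthant - {\<lambda>_. 0}" unfolding orthant_def by (auto simp: fun_eq_iff)
    then have "peval p (\<lambda>_. 1) > 0" using pos by blast
    moreover have "(\<lambda>_. 1::real) \<in> orthant" unfolding orthant_def by auto
    moreover have "m \<ge> 1" using m(1) by (cases m) auto
    ultimately show ?thesis using m by blast
  qed
  have BA: "?A" if B: ?B
  proof -
    obtain m where m: "m \<ge> 1" "strictly_pos_coeffs (p ^ m)" using B by blast
    obtain x0 where x0: "x0 \<in> orthant" "peval p x0 > 0" using B by blast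
    have ap: "AP (p ^ m) (d * m)" by (rule spc_deg[OF form m(2)])
    have pos: "\<forall>y\<in>orthant - {\<lambda>_. 0}. peval p y > 0"
      by (rule pos_from_point[OF form nonconst m(1) ap x0])
    have D: "d * m \<ge> 1" using nonconst m(1) by simp
    obtain N1 where N1: "\<And>N. N \<ge> N1 \<Longrightarrow> AP ((p ^ m) ^ N * p) (d * m * N + d)"
      using KL[OF ap D form pos] by blast
    have "AP ((p ^ m) ^ (2 * N1) * p) (d * m * (2 * N1) + d)" using N1 by simp
    moreover have "(p ^ m) ^ (2 * N1) * p = p ^ (m * (2 * N1) + 1)"
      by (simp add: power_mult power_add)
    moreover have "odd (m * (2 * N1) + 1)" by simp
    ultimately show ?thesis using spc_iff by metis
  qed
  have AC: "?C" if A: ?A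
  proof (intro allI impI)
    fix q :: "'n rpoly"
    assume q: "(\<exists>e. is_form q e) \<and> (\<forall>x\<in>orthant - {\<lambda>_. 0}. peval q x > 0)"
    obtain e where e: "is_form q e" using q by blast
    have qpos: "\<forall>x\<in>orthant - {\<lambda>_. 0}. peval q x > 0" using q by blast
    obtain m where m: "odd m" "strictly_pos_coeffs (p ^ m)" using A by blast
    have ap: "AP (p ^ m) (d * m)" by (rule spc_deg[OF form m(2)])
    have pos: "\<forall>x\<in>orthant - {\<lambda>_. 0}. peval p x > 0" using pos_odd[OF m(1) ap] .
    have m1: "m \<ge> 1" using m(1) by (cases m) auto
    have D: "d * m \<ge> 1" using nonconst m1 by simp
    have ev: "\<forall>r\<in>{..<m}. eventually (\<lambda>N. AP ((p ^ m) ^ N * (p ^ r * q)) (d * m * N + (d * r + e))) sequentially"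
    proof
      fix r assume "r \<in> {..<m}"
      have fr: "is_form (p ^ r * q) (d * r + e)" by (intro is_form_mult is_form_power form e)
      have fpos: "\<forall>x\<in>orthant - {\<lambda>_. 0}. peval (p ^ r * q) x > 0"
        using pos qpos by (simp add: peval_mult peval_power)
      show "eventually (\<lambda>N. AP ((p ^ m) ^ N * (p ^ r * q)) (d * m * N + (d * r + e))) sequentially"
        using KL[OF ap D fr fpos] unfolding eventually_sequentially by blast
    qed
    have "eventually (\<lambda>N. \<forall>r\<in>{..<m}. AP ((p ^ m) ^ N * (p ^ r * q)) (d * m * N + (d * r + e))) sequentially"
      by (rule eventually_ball_finite[OF _ ev]) simp
    then obtain N1 where N1: "\<And>N r. N \<ge> N1 \<Longrightarrow> r < m \<Longrightarrow> AP ((p ^ m) ^ N * (p ^ r * q)) (d * m * N + (d * r + e))"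
      unfolding eventually_sequentially by blast
    have "strictly_pos_coeffs (p ^ k * q)" if k: "k \<ge> m * N1 + 1" for k
    proof -
      define j where "j = k div m"
      define r where "r = k mod m"
      have kjr: "k = m * j + r" unfolding j_def r_def by simp
      have r: "r < m" unfolding r_def using m1 by simp
      have "m * N1 \<le> k" using k by simp
      then have j: "j \<ge> N1" unfolding j_def using m1 by (metis div_le_mono nonzero_mult_div_cancel_left not_one_le_zero)
      have "p ^ k * q = (p ^ m) ^ j * (p ^ r * q)"
        unfolding kjr by (simp add: power_add power_mult mult.assoc)
      then show ?thesis using N1[OF j r] spc_iff by metis
    qed
    then show "\<exists>m0::nat. m0 \<ge> 1 \<and> (\<forall>m\<ge>m0. strictly_pos_coeffs (p ^ m * q))"
      by (intro exI[of _ "m * N1 + 1"]) auto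
  qed
  have CA: "?A" if C: ?C
  proof -
    have "(\<exists>e. is_form (1::'n rpoly) e) \<and> (\<forall>x\<in>orthant - {\<lambda>_. 0}. peval (1::'n rpoly) x > 0)"
      using is_form_one by auto
    then obtain m0 where m0: "\<And>m. m \<ge> m0 \<Longrightarrow> strictly_pos_coeffs (p ^ m * 1)" using C by blast
    have "strictly_pos_coeffs (p ^ (2 * m0 + 1))" using m0[of "2 * m0 + 1"] by simp
    moreover have "odd (2 * m0 + 1)" by simp
    ultimately show ?thesis by blast
  qed
  show ?thesis using AB BA AC CA by blast
qed



end
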